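(* Let $S$ be a poset, $(G_i)_{i\in S}$ a family of impartial games, and $G = S \otimes_i G_i$ their ordered join. Let $T \subseteq S$ be the support of $G$. (1) $G$ is terminating if and only if $T$ is a well partially ordered set and each component $G_i$ ($i\in S$) is terminating. (2) $G$ is short if and only if $T$ is finite and each component $G_i$ ($i \in S$) is short.
   Context: All games are impartial combinatorial games under normal play; a game is determined by its set of options, and $G \to G'$ means $G'$ is an option of $G$. A game is terminating if it admits no infinite sequence of moves, and short if it is terminating and has only finitely many positions (reachable subgames). $\mathbf{0}$ denotes the game with no options. Ordered join: for a poset $S$ and a family $(G_i)_{i\in S}$ of games, $S \otimes_i G_i$ is the game whose options are exactly the ordered joins $S \otimes_i G'_i$ obtained by choosing one $i_0\in S$ and an option $G_{i_0}\to G'_{i_0}$, and setting $G'_i=\mathbf{0}$ for all $i>i_0$ and $G'_i=G_i$ for all other $i\ne i_0$. The support of $S\otimes_i G_i$ is the induced subposet of $S$ consisting of all $i$ with $G_i\neq\mathbf{0}$. A poset is a well partially ordered set (wposet) if every infinite sequence in it contains an infinite ascending subsequence (equivalently, it has no infinite strictly descending chain and no infinite antichain). *)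

theory Defs
  imports Main
begin

text \<open>Impartial games are represented as positions (nodes) in a move graph:
  a type of positions together with a move relation mv, where mv x y means
  that y is an option of x. The game at a node is determined by its options
  (equality of games is bisimilarity of nodes).\<close>

definition terminating :: "('g \<Rightarrow> 'g \<Rightarrow> bool) \<Rightarrow> 'g \<Rightarrow> bool" where
  "terminating mv x \<longleftrightarrow> \<not> (\<exists>f. f 0 = x \<and> (\<forall>n. mv (f n) (f (Suc n))))"

definition game_bisim :: "('g \<Rightarrow> 'g \<Rightarrow> bool) \<Rightarrow> 'g \<Rightarrow> 'g \<Rightarrow> bool" where
  "game_bisim mv x y \<longleftrightarrow> (\<exists>R. R x y \<and>
     (\<forall>a b. R a b \<longrightarrow>
        (\<forall>a'. mv a a' \<longrightarrow> (\<exists>b'. mv b b' \<and> R a' b')) \<and>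
        (\<forall>b'. mv b b' \<longrightarrow> (\<exists>a'. mv a a' \<and> R a' b'))))"

text \<open>Positions (reachable subgames) counted as games, i.e. up to bisimilarity.\<close>
definition short :: "('g \<Rightarrow> 'g \<Rightarrow> bool) \<Rightarrow> 'g \<Rightarrow> bool" where
  "short mv x \<longleftrightarrow> terminating mv x \<and>
     finite ((\<lambda>y. {z. game_bisim mv y z}) ` {y. mv\<^sup>*\<^sup>* x y})"

text \<open>Moves of a component; None stands for the zero game.\<close>
definition opt_mv :: "('g \<Rightarrow> 'g \<Rightarrow> bool) \<Rightarrow> 'g option \<Rightarrow> 'g option \<Rightarrow> bool" where
  "opt_mv mv a b \<longleftrightarrow> (case a of None \<Rightarrow> False
      | Some x \<Rightarrow> (case b of None \<Rightarrow> False | Some y \<Rightarrow> mv x y))"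

definition join_mv :: "('g \<Rightarrow> 'g \<Rightarrow> bool) \<Rightarrow> ('i::order \<Rightarrow> 'g option) \<Rightarrow> ('i \<Rightarrow> 'g option) \<Rightarrow> bool" where
  "join_mv mv F F' \<longleftrightarrow> (\<exists>i0. opt_mv mv (F i0) (F' i0) \<and>
      (\<forall>i. i0 < i \<longrightarrow> F' i = None) \<and>
      (\<forall>i. i \<noteq> i0 \<and> \<not> i0 < i \<longrightarrow> F' i = F i))"

definition ordered_join :: "('i::order \<Rightarrow> 'g) \<Rightarrow> ('i \<Rightarrow> 'g option)" where
  "ordered_join G = (\<lambda>i. Some (G i))"

definition support :: "('g \<Rightarrow> 'g \<Rightarrow> bool) \<Rightarrow> ('i \<Rightarrow> 'g) \<Rightarrow> 'i set" where
  "support mv G = {i. \<exists>y. mv (G i) y}"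

definition wpo_on :: "('i::order) set \<Rightarrow> bool" where
  "wpo_on T \<longleftrightarrow> (\<forall>f::nat \<Rightarrow> _. (\<forall>n. f n \<in> T) \<longrightarrow>
      (\<exists>h::nat \<Rightarrow> nat. strict_mono h \<and> (\<forall>m n. m \<le> n \<longrightarrow> f (h m) \<le> f (h n))))"

end

theory Submission
  imports Defs "HOL-Library.Ramsey" "HOL-Library.Infinite_Set"
begin

definition bnd :: "('g \<Rightarrow> 'g \<Rightarrow> bool) \<Rightarrow> nat \<Rightarrow> 'g \<Rightarrow> bool" where
  "bnd mv N x \<longleftrightarrow> (\<forall>f n. f 0 = x \<and> (\<forall>j<n. mv (f j) (f (Suc j))) \<longrightarrow> n \<le> N)"

abbreviation ac :: "('g \<Rightarrow> 'g \<Rightarrow> bool) \<Rightarrow> 'g \<Rightarrow> bool" where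
  "ac mv \<equiv> Wellfounded.accp (\<lambda>a b. mv b a)"

lemma bisim_refl: "game_bisim mv x x"
  unfolding game_bisim_def by (rule exI[of _ "(=)"]) auto

lemma bisim_sym: assumes "game_bisim mv x y" shows "game_bisim mv y x"
proof -
  from assms obtain R where R: "R x y" "\<forall>a b. R a b \<longrightarrow>
        (\<forall>a'. mv a a' \<longrightarrow> (\<exists>b'. mv b b' \<and> R a' b')) \<and>
        (\<forall>b'. mv b b' \<longrightarrow> (\<exists>a'. mv a a' \<and> R a' b'))" unfolding game_bisim_def by blast
  show ?thesis unfolding game_bisim_def
  proof (intro exI[of _ "\<lambda>a b. R b a"] conjI allI impI)
    show "R x y" by (rule R(1))
  next
    fix a b a' assume "R b a" "mv a a'"
    then show "\<exists>b'. mv b b' \<and> R b' a'" using R(2) by blast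
  next
    fix a b b' assume "R b a" "mv b b'"
    then show "\<exists>a'. mv a a' \<and> R b' a'" using R(2) by blast
  qed
qed

lemma bisim_trans: assumes "game_bisim mv x y" "game_bisim mv y z" shows "game_bisim mv x z"
proof -
  from assms(1) obtain R where R: "R x y" "\<forall>a b. R a b \<longrightarrow>
        (\<forall>a'. mv a a' \<longrightarrow> (\<exists>b'. mv b b' \<and> R a' b')) \<and>
        (\<forall>b'. mv b b' \<longrightarrow> (\<exists>a'. mv a a' \<and> R a' b'))" unfolding game_bisim_def by blast
  from assms(2) obtain S where S: "S y z" "\<forall>a b. S a b \<longrightarrow>
        (\<forall>a'. mv a a' \<longrightarrow> (\<exists>b'. mv b b' \<and> S a' b')) \<and>
        (\<forall>b'. mv b b' \<longrightarrow> (\<exists>a'. mv a a' \<and> S a' b'))" unfolding game_bisim_def by blast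
  show ?thesis unfolding game_bisim_def
  proof (intro exI[of _ "R OO S"] conjI allI impI)
    show "(R OO S) x z" using R(1) S(1) by blast
  next
    fix a c a' assume "(R OO S) a c" "mv a a'"
    then obtain b where "R a b" "S b c" by blast
    with R(2) \<open>mv a a'\<close> obtain b' where "mv b b'" "R a' b'" by blast
    with S(2) \<open>S b c\<close> obtain c' where "mv c c'" "S b' c'" by blast
    then show "\<exists>c'. mv c c' \<and> (R OO S) a' c'" using \<open>R a' b'\<close> by blast
  next
    fix a c c' assume "(R OO S) a c" "mv c c'"
    then obtain b where "R a b" "S b c" by blast
    with S(2) \<open>mv c c'\<close> obtain b' where "mv b b'" "S b' c'" by blast
    with R(2) \<open>R a b\<close> obtain a' where "mv a a'" "R a' b'" by blast
    then show "\<exists>a'. mv a a' \<and> (R OO S) a' c'" using \<open>S b' c'\<close> by blast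
  qed
qed

lemma bisim_step: "game_bisim mv x y \<Longrightarrow> mv x x' \<Longrightarrow> \<exists>y'. mv y y' \<and> game_bisim mv x' y'"
  unfolding game_bisim_def by blast

lemma bisim_pow: "game_bisim mv x y \<Longrightarrow> (mv^^d) x x' \<Longrightarrow> \<exists>y'. (mv^^d) y y' \<and> game_bisim mv x' y'"
proof (induction d arbitrary: x')
  case 0 then show ?case by auto
next
  case (Suc d)
  then obtain z where z: "(mv^^d) x z" "mv z x'" by auto
  with Suc obtain w where w: "(mv^^d) y w" "game_bisim mv z w" by blast
  with bisim_step[OF w(2) z(2)] obtain y' where "mv w y'" "game_bisim mv x' y'" by blast
  with w show ?case by auto
qed

lemma class_eq: assumes "game_bisim mv x y" shows "{z. game_bisim mv x z} = {z. game_bisim mv y z}"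
proof
  show "{z. game_bisim mv x z} \<subseteq> {z. game_bisim mv y z}"
    using bisim_trans[OF bisim_sym[OF assms]] by blast
  show "{z. game_bisim mv y z} \<subseteq> {z. game_bisim mv x z}"
    using bisim_trans[OF assms] by blast
qed

lemma term_accp: "terminating mv x \<longleftrightarrow> ac mv x"
proof
  assume "ac mv x"
  then have "\<forall>f. f 0 = x \<longrightarrow> \<not> (\<forall>n. mv (f n) (f (Suc n)))"
  proof (induction rule: Wellfounded.accp_induct_rule)
    case (1 x)
    show ?case
    proof (intro allI impI notI)
      fix f assume f: "f 0 = x" "\<forall>n. mv (f n) (f (Suc n))"
      then have "mv x (f 1)" by (metis One_nat_def)
      then have "\<forall>g. g 0 = f 1 \<longrightarrow> \<not> (\<forall>n. mv (g n) (g (Suc n)))" using 1 by blast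
      from this[rule_format, of "\<lambda>n. f (Suc n)"] f show False by auto
    qed
  qed
  then show "terminating mv x" unfolding terminating_def by blast
next
  assume t: "terminating mv x"
  show "ac mv x"
  proof (rule ccontr)
    assume na: "\<not> ac mv x"
    have st: "\<exists>y. mv z y \<and> \<not> ac mv y" if "\<not> ac mv z" for z
      using that Wellfounded.accp.accI[of "\<lambda>a b. mv b a" z] by blast
    have "\<exists>f. \<forall>n. (\<lambda>n y. \<not> ac mv y \<and> (n = 0 \<longrightarrow> y = x)) n (f n) \<and> mv (f n) (f (Suc n))"
      by (rule dependent_nat_choice) (use na st in auto)
    then obtain f where "\<forall>n. (\<not> ac mv (f n) \<and> (n = 0 \<longrightarrow> f n = x)) \<and> mv (f n) (f (Suc n))" by blast
    with t show False unfolding terminating_def by blast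
  qed
qed

lemma rtranclp_conv: "mv\<^sup>*\<^sup>* x y \<Longrightarrow> (\<lambda>a b. mv b a)\<^sup>*\<^sup>* y x"
proof (induction rule: rtranclp_induct)
  case base then show ?case by (rule rtranclp.rtrancl_refl)
next
  case (step y z)
  show ?case by (rule converse_rtranclp_into_rtranclp[of "\<lambda>a b. mv b a", OF step(2) step(3)])
qed

lemma term_reach: "terminating mv x \<Longrightarrow> mv\<^sup>*\<^sup>* x y \<Longrightarrow> terminating mv y"
  unfolding term_accp by (erule Wellfounded.accp_downwards, erule rtranclp_conv)

lemma no_self_bisim:
  assumes t: "terminating mv p" and d: "(mv^^d) p q" "d > 0" and b: "game_bisim mv p q"
  shows False
proof -
  let ?A = "{w. game_bisim mv w p}"
  have succ: "\<exists>w1 w'. mv w w1 \<and> mv\<^sup>*\<^sup>* w1 w' \<and> w' \<in> ?A" if "w \<in> ?A" for w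
  proof -
    from that have "game_bisim mv w p" by simp
    then have "game_bisim mv p w" by (rule bisim_sym)
    from bisim_pow[OF this d(1)] obtain w' where w': "(mv^^d) w w'" "game_bisim mv q w'" by blast
    then have "w' \<in> ?A" using bisim_trans[OF bisim_sym[OF w'(2)] bisim_sym[OF b]] by simp
    have "(mv^^(Suc (d-1))) w w'" unfolding Suc_diff_1[OF d(2)] by (rule w'(1))
    then obtain w1 where w1: "mv w w1" "(mv^^(d-1)) w1 w'"
      by (rule relpowp_Suc_E2)
    have "mv\<^sup>*\<^sup>* w1 w'" by (rule relpowp_imp_rtranclp[OF w1(2)])
    with w1(1) \<open>w' \<in> ?A\<close> show ?thesis by blast
  qed
  have acc: "ac mv z \<Longrightarrow> \<forall>w. mv\<^sup>*\<^sup>* z w \<longrightarrow> w \<notin> ?A" for z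
  proof (induction rule: Wellfounded.accp_induct_rule)
    case (1 z)
    have IH: "\<And>y. mv z y \<Longrightarrow> \<forall>w. mv\<^sup>*\<^sup>* y w \<longrightarrow> w \<notin> ?A" using 1 by blast
    show ?case
    proof (intro allI impI)
      fix w assume "mv\<^sup>*\<^sup>* z w"
      then show "w \<notin> ?A"
      proof (cases rule: converse_rtranclpE)
        case base
        show ?thesis
        proof
          assume "w \<in> ?A"
          from succ[OF this] obtain w1 w' where "mv w w1" "mv\<^sup>*\<^sup>* w1 w'" "w' \<in> ?A" by blast
          then have "w' \<notin> ?A" using IH[of w1] base by blast
          with \<open>w' \<in> ?A\<close> show False by blast
        qed
      next
        case (step z1) then show ?thesis using IH[of z1] by blast
      qed
    qed
  qed
  have "ac mv p" using t by (simp add: term_accp)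
  from acc[OF this] have "p \<notin> ?A" by blast
  then show False using bisim_refl[of mv p] by simp
qed

lemma bnd_terminating: "bnd mv N x \<Longrightarrow> terminating mv x"
  unfolding bnd_def terminating_def by (metis Suc_n_not_le_n)

lemma bnd_step: assumes "bnd mv N x" "mv x y" shows "N > 0 \<and> bnd mv (N - 1) y"
proof -
  have *: "Suc n \<le> N" if "f 0 = y" "\<forall>j<n. mv (f j) (f (Suc j))" for f n
  proof -
    let ?g = "\<lambda>j. if j = 0 then x else f (j - 1)"
    have "?g 0 = x" by simp
    moreover have "\<forall>j<Suc n. mv (?g j) (?g (Suc j))"
      using that assms(2) by (auto simp: less_Suc_eq_0_disj)
    ultimately show ?thesis
      using assms(1)[unfolded bnd_def, THEN spec[of _ ?g], THEN spec[of _ "Suc n"]] by blast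
  qed
  from *[of "\<lambda>_. y" 0] have "N > 0" by simp
  show ?thesis unfolding bnd_def
  proof (intro conjI allI impI)
    fix f n assume "f 0 = y \<and> (\<forall>j<n. mv (f j) (f (Suc j)))"
    then have "Suc n \<le> N" using * by blast
    then show "n \<le> N - 1" by simp
  qed (rule \<open>N > 0\<close>)
qed

lemma bnd_mono: assumes "bnd mv N x" "N \<le> M" shows "bnd mv M x"
  unfolding bnd_def
proof (intro allI impI)
  fix f n assume h: "f 0 = x \<and> (\<forall>j<n. mv (f j) (f (Suc j)))"
  then have "n \<le> N" using assms(1) unfolding bnd_def by blast
  then show "n \<le> M" using assms(2) by simp
qed

lemma bnd_reach: "mv\<^sup>*\<^sup>* x y \<Longrightarrow> bnd mv N x \<Longrightarrow> bnd mv N y"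
proof (induction rule: rtranclp_induct)
  case base then show ?case .
next
  case (step y z)
  then have "bnd mv (N - 1) z" using bnd_step[of mv N y z] by blast
  then show ?case by (rule bnd_mono) simp
qed

lemma finite_factor:
  assumes "finite (f ` A)" "\<And>x y. x \<in> A \<Longrightarrow> y \<in> A \<Longrightarrow> f x = f y \<Longrightarrow> g x = g y"
  shows "finite (g ` A)"
proof -
  have "g ` A = (\<lambda>v. g (inv_into A f v)) ` (f ` A)"
  proof (intro equalityI subsetI)
    fix z assume "z \<in> g ` A"
    then obtain x where x: "x \<in> A" "z = g x" by auto
    have "inv_into A f (f x) \<in> A" "f (inv_into A f (f x)) = f x"
      using x by (auto intro: inv_into_into f_inv_into_f)
    then have "g (inv_into A f (f x)) = g x" using x(1) assms(2) by blast
    then show "z \<in> (\<lambda>v. g (inv_into A f v)) ` (f ` A)" using x by (metis imageI)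
  next
    fix z assume "z \<in> (\<lambda>v. g (inv_into A f v)) ` (f ` A)"
    then show "z \<in> g ` A" by (auto intro: inv_into_into)
  qed
  then show ?thesis using assms(1) by simp
qed

definition cls :: "('g \<Rightarrow> 'g \<Rightarrow> bool) \<Rightarrow> 'g \<Rightarrow> 'g set" where
  "cls mv x = {z. game_bisim mv x z}"

lemma optcls_bisim:
  assumes "cls mv ` {x'. mv x x'} = cls mv ` {y'. mv y y'}"
  shows "game_bisim mv x y"
proof -
  define R where "R = (\<lambda>a b. game_bisim mv a b \<or> cls mv ` {x'. mv a x'} = cls mv ` {y'. mv b y'})"
  have A: "\<exists>b'. mv b b' \<and> R a' b'" if "R a b" "mv a a'" for a b a'
  proof (cases "game_bisim mv a b")
    case True
    from bisim_step[OF True that(2)] obtain b' where "mv b b'" "game_bisim mv a' b'" by blast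
    then show ?thesis unfolding R_def by blast
  next
    case False
    with that have "cls mv a' \<in> cls mv ` {y'. mv b y'}" unfolding R_def by auto
    then obtain b' where "mv b b'" "cls mv a' = cls mv b'" by auto
    moreover have "b' \<in> cls mv b'" unfolding cls_def using bisim_refl[of mv b'] by simp
    ultimately have "b' \<in> cls mv a'" by simp
    then have "game_bisim mv a' b'" unfolding cls_def by simp
    with \<open>mv b b'\<close> show ?thesis unfolding R_def by blast
  qed
  have B: "\<exists>a'. mv a a' \<and> R a' b'" if "R a b" "mv b b'" for a b b'
  proof (cases "game_bisim mv a b")
    case True
    from bisim_step[OF bisim_sym[OF True] that(2)] obtain a' where "mv a a'" "game_bisim mv b' a'" by blast
    then show ?thesis using bisim_sym[of mv b' a'] unfolding R_def by blast
  next
    case False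
    with that have "cls mv b' \<in> cls mv ` {x'. mv a x'}" unfolding R_def by auto
    then obtain a' where "mv a a'" "cls mv b' = cls mv a'" by auto
    moreover have "a' \<in> cls mv a'" unfolding cls_def using bisim_refl[of mv a'] by simp
    ultimately have "a' \<in> cls mv b'" by simp
    then have "game_bisim mv a' b'" unfolding cls_def using bisim_sym[of mv b' a'] by simp
    with \<open>mv a a'\<close> show ?thesis unfolding R_def by blast
  qed
  have "R x y" unfolding R_def using assms by simp
  then show ?thesis unfolding game_bisim_def
  proof (intro exI[of _ R] conjI allI impI)
    fix a b a' assume "R a b" "mv a a'" then show "\<exists>b'. mv b b' \<and> R a' b'" by (rule A)
  next
    fix a b b' assume "R a b" "mv b b'" then show "\<exists>a'. mv a a' \<and> R a' b'" by (rule B)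
  qed
qed

lemma cls_eq: "game_bisim mv x y \<Longrightarrow> cls mv x = cls mv y"
  unfolding cls_def by (rule class_eq)

lemma finite_bnd_cls: "finite (cls mv ` {z. bnd mv N z})"
proof (induction N)
  case 0
  have "finite ((\<lambda>z. cls mv ` {x'. mv z x'}) ` {z. bnd mv 0 z})"
  proof (rule finite_subset)
    show "(\<lambda>z. cls mv ` {x'. mv z x'}) ` {z. bnd mv 0 z} \<subseteq> {{}}"
      using bnd_step by fastforce
  qed auto
  then show ?case by (rule finite_factor) (rule cls_eq, rule optcls_bisim, assumption)
next
  case (Suc N)
  have "finite ((\<lambda>z. cls mv ` {x'. mv z x'}) ` {z. bnd mv (Suc N) z})"
  proof (rule finite_subset)
    show "(\<lambda>z. cls mv ` {x'. mv z x'}) ` {z. bnd mv (Suc N) z} \<subseteq> Pow (cls mv ` {z. bnd mv N z})"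
      using bnd_step by fastforce
  qed (use Suc in auto)
  then show ?case by (rule finite_factor) (rule cls_eq, rule optcls_bisim, assumption)
qed

lemma reach_seq0:
  assumes "P 0 = Q" "\<forall>k<n. R (P k) (P (Suc k))" "j \<le> n"
  shows "R\<^sup>*\<^sup>* Q (P j)"
  using assms(3)
proof (induction j)
  case 0 then show ?case using assms(1) by simp
next
  case (Suc j)
  then have "R\<^sup>*\<^sup>* Q (P j)" by simp
  moreover have "R (P j) (P (Suc j))" using assms(2) Suc.prems by simp
  ultimately show ?case by (rule rtranclp.rtrancl_into_rtrancl)
qed

lemma short_iff_bnd: "short mv x \<longleftrightarrow> (\<exists>N. bnd mv N x)"
proof
  assume "\<exists>N. bnd mv N x"
  then obtain N where N: "bnd mv N x" by blast
  have "cls mv ` {y. mv\<^sup>*\<^sup>* x y} \<subseteq> cls mv ` {z. bnd mv N z}"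
  proof (rule image_mono, rule subsetI)
    fix y assume "y \<in> {y. mv\<^sup>*\<^sup>* x y}"
    then have "mv\<^sup>*\<^sup>* x y" by simp
    from bnd_reach[OF this N] show "y \<in> {z. bnd mv N z}" by simp
  qed
  then have fin: "finite (cls mv ` {y. mv\<^sup>*\<^sup>* x y})" by (rule finite_subset) (rule finite_bnd_cls)
  have "cls mv = (\<lambda>y. {z. game_bisim mv y z})" unfolding cls_def[abs_def] by (rule refl)
  with fin have "finite ((\<lambda>y. {z. game_bisim mv y z}) ` {y. mv\<^sup>*\<^sup>* x y})" by simp
  moreover have "terminating mv x" by (rule bnd_terminating[OF N])
  ultimately show "short mv x" unfolding short_def by (intro conjI)
next
  assume s: "short mv x"
  let ?C = "cls mv ` {y. mv\<^sup>*\<^sup>* x y}"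
  have "cls mv = (\<lambda>y. {z. game_bisim mv y z})" unfolding cls_def[abs_def] by (rule refl)
  then have fC: "finite ?C" and t: "terminating mv x"
    using s unfolding short_def by simp_all
  have "bnd mv (card ?C) x" unfolding bnd_def
  proof (intro allI impI, rule ccontr)
    fix f n assume f: "f 0 = x \<and> (\<forall>j<n. mv (f j) (f (Suc j)))" and nle: "\<not> n \<le> card ?C"
    have reach: "mv\<^sup>*\<^sup>* x (f j)" if "j \<le> n" for j
      using reach_seq0[of f x n mv j] f that by blast
    have "(\<lambda>j. cls mv (f j)) ` {0..n} \<subseteq> ?C"
    proof
      fix c assume "c \<in> (\<lambda>j. cls mv (f j)) ` {0..n}"
      then obtain j where "j \<le> n" "c = cls mv (f j)" by auto
      then show "c \<in> ?C" using reach[of j] by blast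
    qed
    then have cle: "card ((\<lambda>j. cls mv (f j)) ` {0..n}) \<le> card ?C" using fC by (rule card_mono[rotated])
    have "\<not> inj_on (\<lambda>j. cls mv (f j)) {0..n}"
    proof
      assume "inj_on (\<lambda>j. cls mv (f j)) {0..n}"
      then have "card ((\<lambda>j. cls mv (f j)) ` {0..n}) = Suc n" by (simp add: card_image)
      with cle nle show False by simp
    qed
    then obtain a b where ab: "a \<in> {0..n}" "b \<in> {0..n}" "a \<noteq> b" "cls mv (f a) = cls mv (f b)"
      unfolding inj_on_def by blast
    have key: False if "a < b" "b \<le> n" "cls mv (f a) = cls mv (f b)" for a b
    proof -
      have "f b \<in> cls mv (f b)" unfolding cls_def using bisim_refl[of mv "f b"] by simp
      with that(3) have "f b \<in> cls mv (f a)" by simp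
      then have bi: "game_bisim mv (f a) (f b)" unfolding cls_def by simp
      have pw: "(mv ^^ k) (f a) (f (a + k))" if "a + k \<le> n" for k
        using that
      proof (induction k)
        case 0 then show ?case by simp
      next
        case (Suc k)
        then have "(mv ^^ k) (f a) (f (a + k))" by simp
        moreover have "mv (f (a + k)) (f (Suc (a + k)))" using f Suc.prems by simp
        ultimately show ?case by auto
      qed
      have "(mv ^^ (b - a)) (f a) (f (a + (b - a)))" by (rule pw) (use that in simp)
      then have pw2: "(mv ^^ (b - a)) (f a) (f b)" using that(1) by simp
      have "terminating mv (f a)" using term_reach[OF t reach[of a]] that by simp
      from no_self_bisim[OF this pw2 _ bi] that(1) show False by simp
    qed
    show False
    proof (cases "a < b")
      case True then show False using key[of a b] ab by simp
    next
      case False then have "b < a" using ab(3) by simp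
      then show False using key[of b a] ab by simp
    qed
  qed
  then show "\<exists>N. bnd mv N x" by blast
qed

lemma join_mv_iff: "join_mv mv F F' \<longleftrightarrow> (\<exists>i0 x y. F i0 = Some x \<and> F' i0 = Some y \<and> mv x y \<and>
      (\<forall>i. i0 < i \<longrightarrow> F' i = None) \<and> (\<forall>i. i \<noteq> i0 \<and> \<not> i0 < i \<longrightarrow> F' i = F i))"
proof
  assume "join_mv mv F F'"
  then obtain i0 where i0: "opt_mv mv (F i0) (F' i0)" "\<forall>i. i0 < i \<longrightarrow> F' i = None"
     "\<forall>i. i \<noteq> i0 \<and> \<not> i0 < i \<longrightarrow> F' i = F i" unfolding join_mv_def by blast
  from i0(1) obtain x y where "F i0 = Some x" "F' i0 = Some y" "mv x y"
    unfolding opt_mv_def by (cases "F i0"; cases "F' i0") auto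
  with i0 show "\<exists>i0 x y. F i0 = Some x \<and> F' i0 = Some y \<and> mv x y \<and>
      (\<forall>i. i0 < i \<longrightarrow> F' i = None) \<and> (\<forall>i. i \<noteq> i0 \<and> \<not> i0 < i \<longrightarrow> F' i = F i)" by blast
next
  assume "\<exists>i0 x y. F i0 = Some x \<and> F' i0 = Some y \<and> mv x y \<and>
      (\<forall>i. i0 < i \<longrightarrow> F' i = None) \<and> (\<forall>i. i \<noteq> i0 \<and> \<not> i0 < i \<longrightarrow> F' i = F i)"
  then obtain i0 x y where h: "F i0 = Some x" "F' i0 = Some y" "mv x y"
      "\<forall>i. i0 < i \<longrightarrow> F' i = None" "\<forall>i. i \<noteq> i0 \<and> \<not> i0 < i \<longrightarrow> F' i = F i" by blast
  then have "opt_mv mv (F i0) (F' i0)" unfolding opt_mv_def by simp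
  with h show "join_mv mv F F'" unfolding join_mv_def by blast
qed

lemma none_persist: assumes "join_mv mv F F'" "F j = None" shows "F' j = None"
proof -
  from assms(1) obtain i0 x y where h: "F i0 = Some x" "F' i0 = Some y" "mv x y"
      "\<forall>i. i0 < i \<longrightarrow> F' i = None" "\<forall>i. i \<noteq> i0 \<and> \<not> i0 < i \<longrightarrow> F' i = F i"
    unfolding join_mv_iff by blast
  have "j \<noteq> i0" using h(1) assms(2) by auto
  then show ?thesis using h(4,5) assms(2) by (cases "i0 < j") auto
qed

lemma none_persist_seq:
  assumes "\<forall>k. a \<le> k \<and> k < b \<longrightarrow> join_mv mv (P k) (P (Suc k))" "P a j = None" "a \<le> b"
  shows "P b j = None"
  using assms
proof (induction b)
  case 0 then show ?case by simp
next
  case (Suc b)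
  show ?case
  proof (cases "a = Suc b")
    case True then show ?thesis using Suc.prems by simp
  next
    case False
    then have ab: "a \<le> b" using Suc.prems(3) by simp
    then have "P b j = None" using Suc.IH Suc.prems by simp
    moreover have "join_mv mv (P b) (P (Suc b))" using Suc.prems(1) ab by simp
    ultimately show ?thesis using none_persist by blast
  qed
qed

lemma reach_inv:
  "(join_mv mv)\<^sup>*\<^sup>* (ordered_join G) P \<Longrightarrow> P j = Some x \<Longrightarrow> mv\<^sup>*\<^sup>* (G j) x"
proof (induction arbitrary: x rule: rtranclp_induct)
  case base then show ?case by (simp add: ordered_join_def)
next
  case (step P P')
  from step.hyps(2) obtain i0 u v where m: "P i0 = Some u" "P' i0 = Some v" "mv u v"
    "\<forall>i. i0 < i \<longrightarrow> P' i = None" "\<forall>i. i \<noteq> i0 \<and> \<not> i0 < i \<longrightarrow> P' i = P i"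
    unfolding join_mv_iff by blast
  show ?case
  proof (cases "j = i0")
    case True
    then have "x = v" using m(2) step.prems by simp
    moreover have "mv\<^sup>*\<^sup>* (G j) u" using step.IH m(1) True by simp
    ultimately show ?thesis using m(3) by (simp add: rtranclp.rtrancl_into_rtrancl)
  next
    case False
    have "\<not> i0 < j" using m(4) step.prems by auto
    then have "P j = Some x" using m(5) False step.prems by simp
    then show ?thesis using step.IH by simp
  qed
qed

lemma reach_support:
  assumes "(join_mv mv)\<^sup>*\<^sup>* (ordered_join G) P" "P i = Some x" "mv x y"
  shows "i \<in> support mv G"
proof -
  have "mv\<^sup>*\<^sup>* (G i) x" using reach_inv[OF assms(1,2)] .
  then show ?thesis
  proof (cases rule: converse_rtranclpE)
    case base then show ?thesis using assms(3) unfolding support_def by auto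
  next
    case (step c) then show ?thesis unfolding support_def by auto
  qed
qed

lemma term_join:
  fixes mv :: "'g \<Rightarrow> 'g \<Rightarrow> bool" and G :: "'i::order \<Rightarrow> 'g"
  assumes wpo: "wpo_on (support mv G)" and tc: "\<forall>i. terminating mv (G i)"
  shows "terminating (join_mv mv) (ordered_join G)"
  unfolding terminating_def
proof
  assume "\<exists>P. P 0 = ordered_join G \<and> (\<forall>n. join_mv mv (P n) (P (Suc n)))"
  then obtain P where P0: "P 0 = ordered_join G" and Pm: "\<forall>n. join_mv mv (P n) (P (Suc n))" by blast
  have "\<forall>n. \<exists>i0. \<exists>x y. P n i0 = Some x \<and> P (Suc n) i0 = Some y \<and> mv x y \<and>
      (\<forall>i. i0 < i \<longrightarrow> P (Suc n) i = None) \<and> (\<forall>i. i \<noteq> i0 \<and> \<not> i0 < i \<longrightarrow> P (Suc n) i = P n i)"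
    using Pm unfolding join_mv_iff by blast
  from choice[OF this] obtain idx where idx: "\<And>n. \<exists>x y. P n (idx n) = Some x \<and> P (Suc n) (idx n) = Some y \<and> mv x y \<and>
      (\<forall>i. idx n < i \<longrightarrow> P (Suc n) i = None) \<and> (\<forall>i. i \<noteq> idx n \<and> \<not> idx n < i \<longrightarrow> P (Suc n) i = P n i)"
    by blast
  have reach: "(join_mv mv)\<^sup>*\<^sup>* (ordered_join G) (P n)" for n
    using reach_seq0[of P "ordered_join G" n "join_mv mv" n] P0 Pm by simp
  have inT: "idx n \<in> support mv G" for n
    using idx[of n] reach_support[OF reach[of n]] by blast
  have persist: "P b j = None" if "P a j = None" "a \<le> b" for a b j
    using none_persist_seq[of a b mv P j] that Pm by blast
  have allT: "\<forall>n. idx n \<in> support mv G" using inT by simp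
  have ex: "\<exists>h::nat\<Rightarrow>nat. strict_mono h \<and> (\<forall>m n. m \<le> n \<longrightarrow> idx (h m) \<le> idx (h n))"
  proof -
    have w: "\<forall>f::nat \<Rightarrow> 'i. (\<forall>n. f n \<in> support mv G) \<longrightarrow>
      (\<exists>h::nat \<Rightarrow> nat. strict_mono h \<and> (\<forall>m n. m \<le> n \<longrightarrow> f (h m) \<le> f (h n)))"
      using wpo unfolding wpo_on_def .
    show ?thesis using mp[OF spec[OF w, of idx] allT] .
  qed
  then obtain h :: "nat \<Rightarrow> nat" where h: "strict_mono h" "\<forall>m n. m \<le> n \<longrightarrow> idx (h m) \<le> idx (h n)" by blast
  have eqs: "idx (h m) = idx (h (Suc m))" for m
  proof (rule ccontr)
    assume ne: "idx (h m) \<noteq> idx (h (Suc m))"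
    have "idx (h m) \<le> idx (h (Suc m))" using h(2) by simp
    with ne have lt: "idx (h m) < idx (h (Suc m))" by (simp add: order_le_neq_trans)
    have "\<forall>i. idx (h m) < i \<longrightarrow> P (Suc (h m)) i = None" using idx[of "h m"] by blast
    with lt have "P (Suc (h m)) (idx (h (Suc m))) = None" by blast
    moreover have "Suc (h m) \<le> h (Suc m)" using h(1) by (simp add: Suc_leI strict_mono_Suc_iff)
    ultimately have "P (h (Suc m)) (idx (h (Suc m))) = None" by (rule persist)
    then show False using idx[of "h (Suc m)"] by simp
  qed
  define i where "i = idx (h 0)"
  have hi: "idx (h m) = i" for m
    unfolding i_def by (induction m) (use eqs in auto)
  have inf: "\<exists>m\<ge>n. idx m = i" for n
  proof -
    have "n \<le> h n" by (rule strict_mono_imp_increasing[OF h(1)])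
    moreover have "idx (h n) = i" by (rule hi)
    ultimately show ?thesis by blast
  qed
  have notNone: "P n i \<noteq> None" for n
  proof
    assume "P n i = None"
    obtain m where "n \<le> m" "idx m = i" using inf by blast
    have "P m i = None" by (rule persist[OF \<open>P n i = None\<close> \<open>n \<le> m\<close>])
    then show False using idx[of m] \<open>idx m = i\<close> by simp
  qed
  have upd: "P (Suc n) j = P n j" if "j \<noteq> idx n" "\<not> idx n < j" for n j
    using idx[of n] that by blast
  have zer: "P (Suc n) j = None" if "idx n < j" for n j
    using idx[of n] that by blast
  have mvd: "\<exists>y. P (Suc n) (idx n) = Some y \<and> mv x y" if "P n (idx n) = Some x" for n x
  proof -
    from idx[of n] obtain x' y where "P n (idx n) = Some x'" "P (Suc n) (idx n) = Some y" "mv x' y" by blast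
    with that show ?thesis by simp
  qed
  have main: "ac mv x \<Longrightarrow> \<forall>n. P n i = Some x \<longrightarrow> False" for x
  proof (induction rule: Wellfounded.accp_induct_rule)
    case (1 x)
    note IH = "1.IH"
    have dd: "\<forall>n. P n i = Some x \<longrightarrow> idx (n + d) = i \<longrightarrow> False" for d
    proof (induction d)
      case 0
      show ?case
      proof (intro allI impI)
        fix n assume a: "P n i = Some x" "idx (n + 0) = i"
        then have "P n (idx n) = Some x" by simp
        from mvd[OF this] obtain y where "P (Suc n) (idx n) = Some y" "mv x y" by blast
        then show False using IH[of y] a(2) by simp
      qed
    next
      case (Suc d)
      show ?case
      proof (intro allI impI)
        fix n assume a: "P n i = Some x" "idx (n + Suc d) = i"
        show False
        proof (cases "idx n = i")
          case True
          then have "P n (idx n) = Some x" using a(1) by simp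
          from mvd[OF this] obtain y where "P (Suc n) (idx n) = Some y" "mv x y" by blast
          then show False using IH[of y] True by simp
        next
          case False
          have nl: "\<not> idx n < i"
          proof
            assume "idx n < i"
            then have "P (Suc n) i = None" by (rule zer)
            then show False using notNone[of "Suc n"] by simp
          qed
          have "P (Suc n) i = P n i" using upd[of i n] False nl by simp
          then have "P (Suc n) i = Some x" using a(1) by simp
          moreover have "idx (Suc n + d) = i" using a(2) by simp
          ultimately show False using Suc.IH by blast
        qed
      qed
    qed
    show ?case
    proof (intro allI impI)
      fix n assume "P n i = Some x"
      obtain m where "n \<le> m" "idx m = i" using inf by blast
      then have "idx (n + (m - n)) = i" by simp
      then show False using \<open>P n i = Some x\<close> dd[of "m - n"] by blast
    qed
  qed
  have "terminating mv (G i)" using tc by simp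
  then have "ac mv (G i)" by (simp add: term_accp)
  from main[OF this] have "P 0 i \<noteq> Some (G i)" by blast
  then show False using P0 by (simp add: ordered_join_def)
qed

lemma comp_play:
  fixes G :: "'i::order \<Rightarrow> 'g"
  assumes f0: "f 0 = G i" and fm: "\<forall>j<n. mv (f j) (f (Suc j))"
  shows "(\<lambda>j k. if 0 < j \<and> i < k then None else if k = i then Some (f j) else Some (G k)) 0 = ordered_join G"
    and "\<forall>j<n. join_mv mv ((\<lambda>j k. if 0 < j \<and> i < k then None else if k = i then Some (f j) else Some (G k)) j)
                     ((\<lambda>j k. if 0 < j \<and> i < k then None else if k = i then Some (f j) else Some (G k)) (Suc j))"
proof -
  show "(\<lambda>j k. if 0 < j \<and> i < k then None else if k = i then Some (f j) else Some (G k)) 0 = ordered_join G"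
    using f0 by (auto simp: ordered_join_def)
  show "\<forall>j<n. join_mv mv ((\<lambda>j k. if 0 < j \<and> i < k then None else if k = i then Some (f j) else Some (G k)) j)
                     ((\<lambda>j k. if 0 < j \<and> i < k then None else if k = i then Some (f j) else Some (G k)) (Suc j))"
  proof (intro allI impI)
    fix j assume "j < n"
    then have m: "mv (f j) (f (Suc j))" using fm by simp
    show "join_mv mv ((\<lambda>j k. if 0 < j \<and> i < k then None else if k = i then Some (f j) else Some (G k)) j)
                     ((\<lambda>j k. if 0 < j \<and> i < k then None else if k = i then Some (f j) else Some (G k)) (Suc j))"
      unfolding join_mv_iff
      by (rule exI[of _ i], rule exI[of _ "f j"], rule exI[of _ "f (Suc j)"]) (use m in auto)
  qed
qed

lemma term_comp:
  fixes G :: "'i::order \<Rightarrow> 'g"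
  assumes "terminating (join_mv mv) (ordered_join G)"
  shows "terminating mv (G i)"
proof (rule ccontr)
  assume "\<not> terminating mv (G i)"
  then obtain f where f: "f 0 = G i" "\<forall>n. mv (f n) (f (Suc n))" unfolding terminating_def by blast
  define F where "F = (\<lambda>j k. if 0 < j \<and> i < k then None else if k = i then Some (f j) else Some (G k))"
  have "\<forall>j. join_mv mv (F j) (F (Suc j))"
  proof
    fix j
    have "\<forall>j'<Suc j. mv (f j') (f (Suc j'))" using f(2) by simp
    from comp_play(2)[of f G i "Suc j" mv, OF f(1) this] show "join_mv mv (F j) (F (Suc j))"
      unfolding F_def by simp
  qed
  moreover have "F 0 = ordered_join G" using comp_play(1)[of f G i 0 mv] f(1) unfolding F_def by simp
  ultimately have "\<exists>f. f 0 = ordered_join G \<and> (\<forall>n. join_mv mv (f n) (f (Suc n)))" by blast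
  then show False using assms unfolding terminating_def by simp
qed

lemma bad_play:
  fixes G :: "'i::order \<Rightarrow> 'g" and g :: "nat \<Rightarrow> 'i"
  assumes inT: "\<forall>n. g n \<in> support mv G" and bad: "\<forall>m n. m < n \<longrightarrow> \<not> g m \<le> g n"
  shows "\<not> terminating (join_mv mv) (ordered_join G)"
proof -
  define y' where "y' = (\<lambda>k. SOME y. mv (G k) y)"
  have my: "mv (G (g n)) (y' (g n))" for n
  proof -
    have "\<exists>y. mv (G (g n)) y" using inT unfolding support_def by blast
    then show ?thesis unfolding y'_def by (rule someI_ex)
  qed
  define F where "F = (\<lambda>n k. if \<exists>m<n. g m < k then None else if \<exists>m<n. k = g m then Some (y' k) else Some (G k))"
  have F0: "F 0 = ordered_join G" unfolding F_def ordered_join_def by simp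
  have step: "join_mv mv (F n) (F (Suc n))" for n
    unfolding join_mv_iff
  proof (intro exI conjI allI impI)
    have n1: "\<not> (\<exists>m<n. g m < g n)" using bad by (meson less_imp_le)
    have n2: "\<not> (\<exists>m<n. g n = g m)" using bad by (metis order_refl)
    show "F n (g n) = Some (G (g n))" unfolding F_def using n1 n2 by auto
    have n3: "\<not> (\<exists>m<Suc n. g m < g n)"
    proof
      assume "\<exists>m<Suc n. g m < g n"
      then obtain m where "m < Suc n" "g m < g n" by blast
      then have "m < n \<or> m = n" by (simp add: less_Suc_eq)
      then show False using n1 \<open>g m < g n\<close> by auto
    qed
    show "F (Suc n) (g n) = Some (y' (g n))" unfolding F_def using n3 by auto
    show "mv (G (g n)) (y' (g n))" by (rule my)
  next
    fix k assume "g n < k"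
    then show "F (Suc n) k = None" unfolding F_def by auto
  next
    fix k assume k: "k \<noteq> g n \<and> \<not> g n < k"
    have e1: "(\<exists>m<Suc n. g m < k) \<longleftrightarrow> (\<exists>m<n. g m < k)" using k by (auto simp: less_Suc_eq)
    have e2: "(\<exists>m<Suc n. k = g m) \<longleftrightarrow> (\<exists>m<n. k = g m)" using k by (auto simp: less_Suc_eq)
    show "F (Suc n) k = F n k" unfolding F_def using e1 e2 by auto
  qed
  show ?thesis unfolding terminating_def using F0 step by blast
qed

lemma wpo_from_term:
  fixes G :: "'i::order \<Rightarrow> 'g"
  assumes t: "terminating (join_mv mv) (ordered_join G)"
  shows "wpo_on (support mv G)"
  unfolding wpo_on_def
proof (intro allI impI)
  fix f :: "nat \<Rightarrow> 'i" assume fT: "\<forall>n. f n \<in> support mv G"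
  define c where "c = (\<lambda>X::nat set. if f (Min X) \<le> f (Max X) then 0 else (1::nat))"
  have "\<forall>x\<in>(UNIV::nat set). \<forall>y\<in>UNIV. x \<noteq> y \<longrightarrow> c {x, y} < 2" unfolding c_def by simp
  from Ramsey2[OF infinite_UNIV_nat this]
  obtain Y t where Y: "infinite Y" "t < 2" "\<forall>x\<in>Y. \<forall>y\<in>Y. x \<noteq> y \<longrightarrow> c {x, y} = t" by blast
  from infinite_enumerate[OF Y(1)] obtain r :: "nat \<Rightarrow> nat" where r: "strict_mono r" "\<forall>n. r n \<in> Y" by blast
  have col: "c {r m, r n} = t" if "m < n" for m n
  proof -
    have "r m < r n" using r(1) that by (simp add: strict_mono_less)
    then show ?thesis using Y(3) r(2) by simp
  qed
  have mm: "Min {r m, r n} = r m" "Max {r m, r n} = r n" if "m < n" for m n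
  proof -
    have "r m < r n" using r(1) that by (simp add: strict_mono_less)
    then show "Min {r m, r n} = r m" "Max {r m, r n} = r n" by auto
  qed
  show "\<exists>h::nat \<Rightarrow> nat. strict_mono h \<and> (\<forall>m n. m \<le> n \<longrightarrow> f (h m) \<le> f (h n))"
  proof (cases "t = 0")
    case True
    have "f (r m) \<le> f (r n)" if "m \<le> n" for m n
    proof (cases "m = n")
      case True then show ?thesis by simp
    next
      case False
      then have "m < n" using that by simp
      then have "c {r m, r n} = 0" using col \<open>t = 0\<close> by simp
      then show ?thesis unfolding c_def using mm[OF \<open>m < n\<close>] by (simp split: if_splits)
    qed
    then show ?thesis using r(1) by blast
  next
    case False
    then have t1: "t = 1" using Y(2) by simp
    have "\<not> f (r m) \<le> f (r n)" if "m < n" for m n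
    proof -
      have "c {r m, r n} = 1" using col[OF that] t1 by simp
      then show ?thesis unfolding c_def using mm[OF that] by (simp split: if_splits)
    qed
    then have "\<forall>m n. m < n \<longrightarrow> \<not> (f \<circ> r) m \<le> (f \<circ> r) n" by simp
    moreover have "\<forall>n. (f \<circ> r) n \<in> support mv G" using fT by simp
    ultimately have "\<not> terminating (join_mv mv) (ordered_join G)"
      using bad_play[of "f \<circ> r" mv G] by blast
    then show ?thesis using t by simp
  qed
qed

lemma fin_support_of_bnd:
  fixes G :: "'i::order \<Rightarrow> 'g"
  assumes b: "bnd (join_mv mv) N (ordered_join G)"
  shows "finite (support mv G)"
proof (rule ccontr)
  assume inf: "infinite (support mv G)"
  have wpo: "wpo_on (support mv G)" by (rule wpo_from_term[OF bnd_terminating[OF b]])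
  from infinite_countable_subset[OF inf] obtain c :: "nat \<Rightarrow> 'i" where c: "inj c" "range c \<subseteq> support mv G"
    by blast
  have cT: "\<forall>n. c n \<in> support mv G" using c(2) by blast
  have ex: "\<exists>h::nat\<Rightarrow>nat. strict_mono h \<and> (\<forall>m n. m \<le> n \<longrightarrow> c (h m) \<le> c (h n))"
  proof -
    have w: "\<forall>f::nat \<Rightarrow> 'i. (\<forall>n. f n \<in> support mv G) \<longrightarrow>
      (\<exists>h::nat \<Rightarrow> nat. strict_mono h \<and> (\<forall>m n. m \<le> n \<longrightarrow> f (h m) \<le> f (h n)))"
      using wpo unfolding wpo_on_def .
    show ?thesis using mp[OF spec[OF w, of c] cT] .
  qed
  then obtain h :: "nat \<Rightarrow> nat" where h: "strict_mono h" "\<forall>m n. m \<le> n \<longrightarrow> c (h m) \<le> c (h n)" by blast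
  define d where "d = (\<lambda>m. c (h m))"
  have dlt: "d m < d n" if "m < n" for m n
  proof -
    have "h m < h n" using h(1) that by (simp add: strict_mono_less)
    then have "h m \<noteq> h n" by simp
    then have "d m \<noteq> d n" unfolding d_def using c(1) by (simp add: inj_eq)
    moreover have "d m \<le> d n" unfolding d_def using h(2) that by simp
    ultimately show ?thesis by (simp add: order_le_neq_trans)
  qed
  define y' where "y' = (\<lambda>k. SOME y. mv (G k) y)"
  have my: "mv (G (d m)) (y' (d m))" for m
  proof -
    have "\<exists>y. mv (G (d m)) y" using cT unfolding support_def d_def by blast
    then show ?thesis unfolding y'_def by (rule someI_ex)
  qed
  define Q where "Q = (\<lambda>m i. if i = d m then Some (y' (d m)) else if d m < i then None else Some (G i))"
  have s1: "join_mv mv (ordered_join G) (Q m)" for m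
    unfolding join_mv_iff
  proof (intro exI conjI allI impI)
    show "ordered_join G (d m) = Some (G (d m))" by (simp add: ordered_join_def)
    show "Q m (d m) = Some (y' (d m))" by (simp add: Q_def)
    show "mv (G (d m)) (y' (d m))" by (rule my)
  next
    fix i assume "d m < i" then show "Q m i = None" unfolding Q_def by auto
  next
    fix i assume "i \<noteq> d m \<and> \<not> d m < i" then show "Q m i = ordered_join G i"
      unfolding Q_def ordered_join_def by auto
  qed
  have s2: "join_mv mv (Q (Suc m)) (Q m)" for m
    unfolding join_mv_iff
  proof (intro exI conjI allI impI)
    have lt: "d m < d (Suc m)" by (rule dlt) simp
    then have "d m \<noteq> d (Suc m)" "\<not> d (Suc m) < d m" by auto
    then show "Q (Suc m) (d m) = Some (G (d m))" unfolding Q_def by simp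
    show "Q m (d m) = Some (y' (d m))" by (simp add: Q_def)
    show "mv (G (d m)) (y' (d m))" by (rule my)
  next
    fix i assume "d m < i" then show "Q m i = None" unfolding Q_def by auto
  next
    fix i assume i: "i \<noteq> d m \<and> \<not> d m < i"
    have lt: "d m < d (Suc m)" by (rule dlt) simp
    have "i \<noteq> d (Suc m)" using i lt by auto
    moreover have "\<not> d (Suc m) < i" using i lt by (meson order.strict_trans)
    ultimately show "Q m i = Q (Suc m) i" unfolding Q_def using i by simp
  qed
  define F where "F = (\<lambda>j. if j = 0 then ordered_join G else Q (Suc N - j))"
  have "\<forall>j<Suc N. join_mv mv (F j) (F (Suc j))"
  proof (intro allI impI)
    fix j assume j: "j < Suc N"
    show "join_mv mv (F j) (F (Suc j))"
    proof (cases "j = 0")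
      case True
      then show ?thesis unfolding F_def using s1 by simp
    next
      case False
      then have e: "Suc N - j = Suc (Suc N - Suc j)" using j by simp
      show ?thesis unfolding F_def using False e s2[of "Suc N - Suc j"] by simp
    qed
  qed
  moreover have "F 0 = ordered_join G" unfolding F_def by simp
  ultimately have "Suc N \<le> N" using b unfolding bnd_def by blast
  then show False by simp
qed

lemma comp_bnd:
  fixes G :: "'i::order \<Rightarrow> 'g"
  assumes b: "bnd (join_mv mv) N (ordered_join G)"
  shows "bnd mv N (G i)"
  unfolding bnd_def
proof (intro allI impI)
  fix f n assume fh: "f 0 = G i \<and> (\<forall>j<n. mv (f j) (f (Suc j)))"
  define F where "F = (\<lambda>j k. if 0 < j \<and> i < k then None else if k = i then Some (f j) else Some (G k))"
  have "\<forall>j<n. join_mv mv (F j) (F (Suc j))"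
    using comp_play(2)[of f G i n mv] fh unfolding F_def by blast
  moreover have "F 0 = ordered_join G" using comp_play(1)[of f G i n mv] fh unfolding F_def by blast
  ultimately show "n \<le> N" using b unfolding bnd_def by blast
qed

lemma bnd_join:
  fixes G :: "'i::order \<Rightarrow> 'g"
  assumes fin: "finite (support mv G)" and bc: "\<forall>i. \<exists>N. bnd mv N (G i)"
  shows "\<exists>N. bnd (join_mv mv) N (ordered_join G)"
proof -
  define hgt where "hgt = (\<lambda>x. LEAST N. bnd mv N x)"
  have hgt_b: "bnd mv (hgt x) x" if "bnd mv N x" for N x
    unfolding hgt_def using that by (rule LeastI)
  have hgt_dec: "hgt y < hgt x" if "bnd mv N x" "mv x y" for N x y
  proof -
    have "hgt x > 0 \<and> bnd mv (hgt x - 1) y" by (rule bnd_step[OF hgt_b[OF that(1)] that(2)])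
    then have p: "hgt x > 0" "bnd mv (hgt x - 1) y" by simp_all
    have "hgt y \<le> hgt x - 1" using Least_le[of "\<lambda>N. bnd mv N y", OF p(2)] unfolding hgt_def .
    then show ?thesis using p(1) by linarith
  qed
  have compb: "\<exists>N. bnd mv N x" if "(join_mv mv)\<^sup>*\<^sup>* (ordered_join G) P" "P i = Some x" for P i x
  proof -
    have r: "mv\<^sup>*\<^sup>* (G i) x" by (rule reach_inv[OF that])
    obtain N where "bnd mv N (G i)" using bc by blast
    from bnd_reach[OF r this] show ?thesis by blast
  qed
  define phi where "phi = (\<lambda>P. \<Sum>i\<in>support mv G. (case P i of None \<Rightarrow> 0 | Some x \<Rightarrow> hgt x))"
  have dec: "phi P' < phi P" if rP: "(join_mv mv)\<^sup>*\<^sup>* (ordered_join G) P" and jm: "join_mv mv P P'" for P P'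
  proof -
    from jm obtain i0 x y where m: "P i0 = Some x" "P' i0 = Some y" "mv x y"
      "\<forall>i. i0 < i \<longrightarrow> P' i = None" "\<forall>i. i \<noteq> i0 \<and> \<not> i0 < i \<longrightarrow> P' i = P i"
      unfolding join_mv_iff by blast
    have i0T: "i0 \<in> support mv G" by (rule reach_support[OF rP m(1) m(3)])
    obtain N where "bnd mv N x" using compb[OF rP m(1)] by blast
    then have lt: "hgt y < hgt x" using hgt_dec m(3) by blast
    let ?t = "\<lambda>P i. (case P i of None \<Rightarrow> 0 | Some x \<Rightarrow> hgt x)"
    have le: "?t P' i \<le> ?t P i" if "i \<in> support mv G" for i
    proof (cases "i = i0")
      case True then show ?thesis using m(1,2) lt by simp
    next
      case False
      show ?thesis
      proof (cases "i0 < i")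
        case True then show ?thesis using m(4) by simp
      next
        case False2: False
        then show ?thesis using m(5) False by simp
      qed
    qed
    have "?t P' i0 < ?t P i0" using m(1,2) lt by simp
    then have "sum (?t P') (support mv G) < sum (?t P) (support mv G)"
      using sum_strict_mono_ex1[OF fin, of "?t P'" "?t P"] le i0T by blast
    then show ?thesis unfolding phi_def by simp
  qed
  have "bnd (join_mv mv) (phi (ordered_join G)) (ordered_join G)"
    unfolding bnd_def
  proof (intro allI impI)
    fix f n assume fh: "f 0 = ordered_join G \<and> (\<forall>j<n. join_mv mv (f j) (f (Suc j)))"
    have "phi (f j) + j \<le> phi (ordered_join G)" if "j \<le> n" for j
      using that
    proof (induction j)
      case 0 then show ?case using fh by simp
    next
      case (Suc j)
      have r: "(join_mv mv)\<^sup>*\<^sup>* (ordered_join G) (f j)"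
        using reach_seq0[of f "ordered_join G" n "join_mv mv" j] fh Suc.prems by simp
      have "join_mv mv (f j) (f (Suc j))" using fh Suc.prems by simp
      from dec[OF r this] have "phi (f (Suc j)) < phi (f j)" .
      with Suc show ?case by simp
    qed
    from this[of n] show "n \<le> phi (ordered_join G)" by simp
  qed
  then show ?thesis by blast
qed

theorem mainTheorem1:
  fixes mv :: "'g \<Rightarrow> 'g \<Rightarrow> bool" and G :: "'i::order \<Rightarrow> 'g"
  shows "(terminating (join_mv mv) (ordered_join G) \<longleftrightarrow>
            wpo_on (support mv G) \<and> (\<forall>i. terminating mv (G i)))
       \<and> (short (join_mv mv) (ordered_join G) \<longleftrightarrow>
            finite (support mv G) \<and> (\<forall>i. short mv (G i)))"
proof (rule conjI)
  show "terminating (join_mv mv) (ordered_join G) \<longleftrightarrow>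
            wpo_on (support mv G) \<and> (\<forall>i. terminating mv (G i))"
  proof
    assume t: "terminating (join_mv mv) (ordered_join G)"
    show "wpo_on (support mv G) \<and> (\<forall>i. terminating mv (G i))"
    proof (intro conjI allI)
      show "wpo_on (support mv G)" by (rule wpo_from_term[OF t])
      fix i show "terminating mv (G i)" by (rule term_comp[OF t])
    qed
  next
    assume "wpo_on (support mv G) \<and> (\<forall>i. terminating mv (G i))"
    then show "terminating (join_mv mv) (ordered_join G)" using term_join by blast
  qed
  show "short (join_mv mv) (ordered_join G) \<longleftrightarrow>
            finite (support mv G) \<and> (\<forall>i. short mv (G i))"
  proof
    assume "short (join_mv mv) (ordered_join G)"
    then obtain N where b: "bnd (join_mv mv) N (ordered_join G)" unfolding short_iff_bnd by blast
    show "finite (support mv G) \<and> (\<forall>i. short mv (G i))"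
    proof (intro conjI allI)
      show "finite (support mv G)" by (rule fin_support_of_bnd[OF b])
      fix i
      have "bnd mv N (G i)" by (rule comp_bnd[OF b])
      then show "short mv (G i)" unfolding short_iff_bnd by blast
    qed
  next
    assume a: "finite (support mv G) \<and> (\<forall>i. short mv (G i))"
    then have "\<forall>i. \<exists>N. bnd mv N (G i)" unfolding short_iff_bnd by blast
    from bnd_join[OF conjunct1[OF a] this] show "short (join_mv mv) (ordered_join G)"
      unfolding short_iff_bnd .
  qed
qed

end
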